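(* Let $A$ be a random real $N\times N$ matrix and $C$ a random vector in $\mathbb{R}^N$ whose $N^2+N$ entries are independent non-singular real random variables. Let $p_1,\dots,p_N\in\mathbb{C}[x]$ be linearly independent polynomials in one variable of degree at most $N-1$. Then $$\mathbb{P}\big(\det(p_1(A)C,\,p_2(A)C,\dots,p_N(A)C)=0\big)=0,$$ i.e. the vectors $p_1(A)C,\dots,p_N(A)C$ are linearly independent almost surely.
   Context: A real random variable $X$ is non-singular if $\mathbb{P}(X=a)=0$ for every $a\in\mathbb{R}$. *)

theory Defs
  imports "HOL-Probability.Probability" "HOL-Computational_Algebra.Polynomial"
begin

primrec mat_pow :: "('a::semiring_1)^'n^'n \<Rightarrow> nat \<Rightarrow> 'a^'n^'n" where
  "mat_pow A 0 = mat 1"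
| "mat_pow A (Suc k) = A ** mat_pow A k"

definition poly_mat :: "('a::comm_semiring_1) poly \<Rightarrow> 'a^'n^'n \<Rightarrow> 'a^'n^'n" where
  "poly_mat p A = (\<Sum>k\<le>degree p. (\<chi> i j. coeff p k * (mat_pow A k $ i $ j)))"

definition poly_lin_indep :: "('i::finite \<Rightarrow> ('a::field) poly) \<Rightarrow> bool" where
  "poly_lin_indep p \<longleftrightarrow>
     (\<forall>c :: 'i \<Rightarrow> 'a. (\<Sum>i\<in>UNIV. smult (c i) (p i)) = 0 \<longrightarrow> (\<forall>i. c i = 0))"

definition (in prob_space) non_singular :: "('a \<Rightarrow> real) \<Rightarrow> bool" where
  "non_singular Y \<longleftrightarrow> (\<forall>a::real. prob {\<omega> \<in> space M. Y \<omega> = a} = 0)"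

end

theory Submission
  imports Defs
begin


lemma finite_null:
  assumes sets: "sets N = sets borel" and atom: "\<And>a. emeasure N {a} = 0" and fin: "finite (R::real set)"
  shows "emeasure N R = 0"
proof -
  have "emeasure N R = (\<integral>\<^sup>+x. emeasure N {x} \<partial>count_space R)"
    using fin sets by (intro emeasure_countable_singleton) (auto intro: countable_finite)
  also have "\<dots> = 0" by (simp add: atom)
  finally show ?thesis .
qed

lemma core:
  fixes D :: "'i \<Rightarrow> real measure"
  assumes psp: "\<And>i. prob_space (D i)" and sets: "\<And>i. sets (D i) = sets borel"
    and atom: "\<And>i a. emeasure (D i) {a} = 0"
  shows "finite J \<Longrightarrow> (\<And>x v. \<exists>q. \<forall>t. f (x(v:=t)) = poly q t) \<Longrightarrow> f \<in> borel_measurable (PiM J D)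
     \<Longrightarrow> x0 \<in> space (PiM J D) \<Longrightarrow> f x0 \<noteq> 0
     \<Longrightarrow> emeasure (PiM J D) {x \<in> space (PiM J D). f x = 0} = 0"
proof (induction J arbitrary: f x0 rule: finite_induct)
  case empty
  then have "{x \<in> space (PiM {} D). f x = 0} = {}" by (auto simp: space_PiM_empty)
  then show ?case by (simp only:) simp
next
  case (insert v J)
  interpret product_sigma_finite D
    unfolding product_sigma_finite_def using prob_space_imp_sigma_finite psp by blast
  have SP: "\<exists>q. \<forall>t. f (x(v:=t)) = poly q t" for x v using insert.prems(1) by blast
  have fm[measurable]: "f \<in> borel_measurable (PiM (insert v J) D)" by fact
  have x0: "x0 \<in> space (PiM (insert v J) D)" by fact
  define c where "c = x0 v"
  have c: "c \<in> space (D v)" using x0 by (auto simp: c_def space_PiM PiE_iff)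
  define h where "h x = f (x(v := c))" for x
  define x1 where "x1 = x0(v := undefined)"
  have x1: "x1 \<in> space (PiM J D)" using x0 insert.hyps
    by (auto simp: x1_def space_PiM PiE_iff extensional_def)
  have "x1(v := c) = x0" by (auto simp: x1_def c_def)
  then have hx1: "h x1 \<noteq> 0" using insert.prems by (simp add: h_def)
  have hSP: "\<exists>q. \<forall>t. h (x(w:=t)) = poly q t" for x w
  proof (cases "w = v")
    case True
    then show ?thesis by (intro exI[of _ "[:f (x(v:=c)):]"]) (simp add: h_def)
  next
    case False
    obtain q where "\<forall>t. f ((x(v:=c))(w:=t)) = poly q t" using SP by blast
    then show ?thesis using False by (intro exI[of _ q]) (simp add: h_def fun_upd_twist)
  qed
  have upd: "(\<lambda>x. x(v := c)) \<in> measurable (PiM J D) (PiM (insert v J) D)"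
    using measurable_fun_upd[where I="insert v J" and J=J and f="\<lambda>x. x" and N="PiM J D" and M=D and h="\<lambda>x. c" and i=v, OF _ measurable_id measurable_const[OF c]] by simp
  have hm: "h \<in> borel_measurable (PiM J D)"
    unfolding h_def using measurable_comp[OF upd fm] by (simp add: comp_def)
  have IH: "emeasure (PiM J D) {x \<in> space (PiM J D). h x = 0} = 0"
    using insert.IH[OF hSP hm x1 hx1] .
  let ?Z = "{x \<in> space (PiM (insert v J) D). f x = 0}"
  have Zs: "?Z \<in> sets (PiM (insert v J) D)" by measurable
  have "emeasure (PiM (insert v J) D) ?Z = (\<integral>\<^sup>+x. indicator ?Z x \<partial>PiM (insert v J) D)"
    using Zs by simp
  also have "\<dots> = (\<integral>\<^sup>+x. (\<integral>\<^sup>+y. indicator ?Z (x(v:=y)) \<partial>D v) \<partial>PiM J D)"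
    using insert.hyps Zs by (intro product_nn_integral_insert) auto
  also have "\<dots> \<le> (\<integral>\<^sup>+x. indicator {x \<in> space (PiM J D). h x = 0} x \<partial>PiM J D)"
  proof (intro nn_integral_mono)
    fix x assume x: "x \<in> space (PiM J D)"
    show "(\<integral>\<^sup>+y. indicator ?Z (x(v:=y)) \<partial>D v) \<le> indicator {x \<in> space (PiM J D). h x = 0} x"
    proof (cases "h x = 0")
      case True
      interpret Dv: prob_space "D v" by (rule psp)
      have "(\<integral>\<^sup>+y. indicator ?Z (x(v:=y)) \<partial>D v) \<le> (\<integral>\<^sup>+y. 1 \<partial>D v)"
        by (intro nn_integral_mono) (auto split: split_indicator)
      also have "\<dots> = 1" by (simp add: Dv.emeasure_space_1)
      finally show ?thesis using True x by simp
    next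
      case False
      obtain q where q: "\<forall>t. f (x(v:=t)) = poly q t" using SP by blast
      have "poly q c \<noteq> 0" using False q by (simp add: h_def)
      then have "q \<noteq> 0" by auto
      then have fin: "finite {t. poly q t = 0}" by (rule poly_roots_finite)
      have Rs: "{t. poly q t = 0} \<in> sets (D v)"
        using sets fin by (simp add: finite_imp_closed)
      have "(\<integral>\<^sup>+y. indicator ?Z (x(v:=y)) \<partial>D v) \<le> (\<integral>\<^sup>+y. indicator {t. poly q t = 0} y \<partial>D v)"
        by (intro nn_integral_mono) (auto split: split_indicator simp: q)
      also have "\<dots> = emeasure (D v) {t. poly q t = 0}" using Rs by simp
      also have "\<dots> = 0" by (rule finite_null[OF sets atom fin])
      finally show ?thesis by simp
    qed
  qed
  also have "\<dots> = 0" using IH hm by simp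
  finally show ?case by simp
qed



lemma closure_sum:
  assumes const: "\<And>c. P (\<lambda>x. c)" and add: "\<And>f g. P f \<Longrightarrow> P g \<Longrightarrow> P (\<lambda>x. f x + g x)"
    and fs: "\<And>a. a \<in> S \<Longrightarrow> P (f a)"
  shows "P (\<lambda>x. \<Sum>a\<in>S. f a x)"
proof (cases "finite S")
  case True
  then show ?thesis using fs
  proof (induction S rule: finite_induct)
    case empty then show ?case using const by simp
  next
    case (insert a S) then show ?case using add[of "f a" "\<lambda>x. \<Sum>a\<in>S. f a x"] by simp
  qed
next
  case False then show ?thesis using const by simp
qed

lemma closure_prod:
  assumes const: "\<And>c. P (\<lambda>x. c)" and mul: "\<And>f g. P f \<Longrightarrow> P g \<Longrightarrow> P (\<lambda>x. f x * g x)"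
    and fs: "\<And>a. a \<in> S \<Longrightarrow> P (f a)"
  shows "P (\<lambda>x. \<Prod>a\<in>S. f a x)"
proof (cases "finite S")
  case True
  then show ?thesis using fs
  proof (induction S rule: finite_induct)
    case empty then show ?case using const by simp
  next
    case (insert a S) then show ?case using mul[of "f a" "\<lambda>x. \<Prod>a\<in>S. f a x"] by simp
  qed
next
  case False then show ?thesis using const by simp
qed

locale clos =
  fixes P :: "('x \<Rightarrow> 'b::comm_ring_1) \<Rightarrow> bool"
  assumes const: "\<And>c. P (\<lambda>x. c)" and add: "\<And>f g. P f \<Longrightarrow> P g \<Longrightarrow> P (\<lambda>x. f x + g x)"
    and mul: "\<And>f g. P f \<Longrightarrow> P g \<Longrightarrow> P (\<lambda>x. f x * g x)"
begin

lemma sum: "(\<And>a. a \<in> S \<Longrightarrow> P (f a)) \<Longrightarrow> P (\<lambda>x. \<Sum>a\<in>S. f a x)"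
  by (rule closure_sum[where P=P, OF const add])

lemma prod: "(\<And>a. a \<in> S \<Longrightarrow> P (f a)) \<Longrightarrow> P (\<lambda>x. \<Prod>a\<in>S. f a x)"
  by (rule closure_prod[where P=P, OF const mul])

lemma matmul:
  fixes B C :: "'x \<Rightarrow> 'b^'n::finite^'n"
  assumes "\<And>i j. P (\<lambda>x. B x $ i $ j)" "\<And>i j. P (\<lambda>x. C x $ i $ j)"
  shows "P (\<lambda>x. (B x ** C x) $ i $ j)"
  unfolding matrix_matrix_mult_def using assms by (simp add: sum mul)

lemma matpow:
  fixes B :: "'x \<Rightarrow> 'b^'n::finite^'n"
  assumes "\<And>i j. P (\<lambda>x. B x $ i $ j)"
  shows "P (\<lambda>x. mat_pow (B x) k $ i $ j)"
proof (induction k arbitrary: i j)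
  case 0
  then show ?case using const by (simp add: mat_def)
next
  case (Suc k)
  then show ?case using matmul[OF assms Suc] by simp
qed

lemma polymat:
  fixes B :: "'x \<Rightarrow> 'b^'n::finite^'n"
  assumes "\<And>i j. P (\<lambda>x. B x $ i $ j)"
  shows "P (\<lambda>x. poly_mat q (B x) $ i $ j)"
  unfolding poly_mat_def using matpow[OF assms]
  by (simp add: sum mul const)

lemma mulvec:
  fixes B :: "'x \<Rightarrow> 'b^'n::finite^'m::finite" and v :: "'x \<Rightarrow> 'b^'n"
  assumes "\<And>i j. P (\<lambda>x. B x $ i $ j)" "\<And>j. P (\<lambda>x. v x $ j)"
  shows "P (\<lambda>x. (B x *v v x) $ i)"
  unfolding matrix_vector_mult_def using assms by (simp add: sum mul)

lemma det:
  fixes B :: "'x \<Rightarrow> 'b^'n::finite^'n"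
  assumes "\<And>i j. P (\<lambda>x. B x $ i $ j)"
  shows "P (\<lambda>x. det (B x))"
  unfolding det_def using assms by (intro sum mul const prod)

end

definition CSP :: "(('i \<Rightarrow> real) \<Rightarrow> complex) \<Rightarrow> bool" where
  "CSP F \<longleftrightarrow> (\<forall>x v. \<exists>q. \<forall>t. F (x(v:=t)) = poly q (complex_of_real t))"

lemma CSP_clos: "clos CSP"
proof
  fix c :: complex show "CSP (\<lambda>x. c)" unfolding CSP_def by (auto intro!: exI[of _ "[:c:]"])
next
  fix f g :: "('i \<Rightarrow> real) \<Rightarrow> complex" assume "CSP f" "CSP g"
  then show "CSP (\<lambda>x. f x + g x)" "CSP (\<lambda>x. f x * g x)" unfolding CSP_def
    by (metis poly_add, metis poly_mult)
qed

lemma CSP_coord: "CSP (\<lambda>x. complex_of_real (x w))"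
  unfolding CSP_def
proof (intro allI)
  fix x :: "'a \<Rightarrow> real" and v
  show "\<exists>q. \<forall>t. complex_of_real ((x(v:=t)) w) = poly q (complex_of_real t)"
  proof (cases "v = w")
    case True then show ?thesis by (auto intro!: exI[of _ "[:0,1:]"])
  next
    case False then show ?thesis by (auto intro!: exI[of _ "[:complex_of_real (x w):]"])
  qed
qed

lemma Re_poly: "Re (poly q (complex_of_real t)) = poly (map_poly Re q) t"
  by (induction q) (auto simp: map_poly_pCons)

lemma meas_clos: "clos (\<lambda>f::'x \<Rightarrow> complex. f \<in> borel_measurable N)"
  by unfold_locales auto



lemma polymat_mulvec:
  fixes B :: "'a::comm_semiring_1^'n::finite^'n"
  shows "(poly_mat q B *v v) $ i = (\<Sum>m\<le>degree q. coeff q m * (mat_pow B m *v v) $ i)"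
  unfolding poly_mat_def matrix_vector_mult_def
  by (simp add: sum_distrib_left sum_distrib_right mult.assoc sum.swap[of _ "{..degree q}"])

lemma nonzero:
  fixes p :: "'n::finite \<Rightarrow> complex poly"
  assumes lin: "poly_lin_indep p" and deg: "\<And>k. degree (p k) \<le> CARD('n) - 1"
  shows "\<exists>(Ar :: real^'n^'n) (Cr :: real^'n).
     det (\<chi> i k. (poly_mat (p k) (map_matrix complex_of_real Ar) *v (\<chi> j. complex_of_real (Cr $ j))) $ i) \<noteq> 0"
proof -
  let ?N = "CARD('n)"
  obtain e :: "'n \<Rightarrow> nat" where e: "bij_betw e UNIV {0..<?N}"
    using ex_bij_betw_finite_nat[of "UNIV :: 'n set"] by auto
  have eN: "e i < ?N" for i using e by (auto simp: bij_betw_def)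
  have Npos: "?N > 0" by simp
  define Ar :: "real^'n^'n" where "Ar = (\<chi> i j. if e i = Suc (e j) then 1 else 0)"
  define Cr :: "real^'n" where "Cr = (\<chi> j. if e j = 0 then 1 else 0)"
  define B where "B = map_matrix complex_of_real Ar"
  define v where "v = (\<chi> j. complex_of_real (Cr $ j))"
  have B: "B $ i $ j = (if e i = Suc (e j) then 1 else 0)" for i j by (simp add: B_def Ar_def)
  have v: "v $ j = (if e j = 0 then 1 else 0)" for j by (simp add: v_def Cr_def)
  have pow: "(mat_pow B k *v v) $ i = (if e i = k then 1 else 0)" for k i
  proof (induction k arbitrary: i)
    case 0 then show ?case by (simp add: v)
  next
    case (Suc k)
    have "(mat_pow B (Suc k) *v v) $ i = (B *v (mat_pow B k *v v)) $ i"
      by (simp add: matrix_vector_mul_assoc)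
    also have "\<dots> = (\<Sum>j\<in>UNIV. B $ i $ j * (mat_pow B k *v v) $ j)"
      by (simp add: matrix_vector_mult_def[of B "mat_pow B k *v v"])
    also have "\<dots> = (\<Sum>j\<in>UNIV. (\<lambda>m. (if e i = Suc m then 1 else 0) * (if m = k then 1 else 0 :: complex)) (e j))"
      by (simp only: B Suc)
    also have "\<dots> = (\<Sum>m\<in>{0..<?N}. (if e i = Suc m then 1 else 0) * (if m = k then 1 else 0 :: complex))"
      by (rule sum.reindex_bij_betw[OF e])
    also have "\<dots> = (\<Sum>m\<in>{0..<?N}. if m = k then (if e i = Suc k then 1 else 0) else 0)"
      by (intro sum.cong) auto
    also have "\<dots> = (if e i = Suc k then 1 else 0)"
      using eN[of i] by (auto simp: sum.delta)
    finally show ?case .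
  qed
  have entry: "(poly_mat (p k) B *v v) $ i = coeff (p k) (e i)" for k i
  proof -
    have "(poly_mat (p k) B *v v) $ i = (\<Sum>m\<le>degree (p k). if m = e i then coeff (p k) (e i) else 0)"
      unfolding polymat_mulvec pow by (intro sum.cong) auto
    also have "\<dots> = coeff (p k) (e i)" by (auto simp: sum.delta coeff_eq_0)
    finally show ?thesis .
  qed
  define Mx :: "complex^'n^'n" where "Mx = (\<chi> i k. coeff (p k) (e i))"
  have "det Mx \<noteq> 0"
    unfolding invertible_det_nz[symmetric] invertible_left_inverse matrix_left_invertible_ker
  proof (intro allI impI)
    fix c :: "complex^'n" assume c: "Mx *v c = 0"
    define Q where "Q = (\<Sum>k\<in>UNIV. smult (c $ k) (p k))"
    have cQ: "coeff Q m = (\<Sum>k\<in>UNIV. c $ k * coeff (p k) m)" for m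
      by (simp add: Q_def coeff_sum)
    have "coeff Q m = 0" for m
    proof (cases "m < ?N")
      case True
      then obtain i where i: "e i = m" using e by (metis atLeastLessThan_iff bij_betw_iff_bijections zero_le)
      have "(Mx *v c) $ i = 0" using c by simp
      then show ?thesis unfolding cQ using i
        by (simp add: Mx_def matrix_vector_mult_def mult.commute)
    next
      case False
      have "coeff (p k) m = 0" for k using deg[of k] False Npos by (intro coeff_eq_0) linarith
      then show ?thesis unfolding cQ by simp
    qed
    then have "Q = 0" by (intro poly_eqI) simp
    then have "\<forall>k. c $ k = 0" using lin unfolding poly_lin_indep_def Q_def by blast
    then show "c = 0" by (simp add: vec_eq_iff)
  qed
  moreover have "(\<chi> i k. (poly_mat (p k) B *v v) $ i) = Mx"
    by (simp add: Mx_def entry)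
  ultimately show ?thesis unfolding B_def v_def by blast
qed



theorem mainTheorem11:
  fixes M :: "'a measure"
    and X :: "(('n::finite \<times> 'n) + 'n) \<Rightarrow> 'a \<Rightarrow> real"
    and p :: "'n \<Rightarrow> complex poly"
  assumes "prob_space M"
    and indep: "prob_space.indep_vars M (\<lambda>_. borel) X UNIV"
    and nonsing: "\<And>k. prob_space.non_singular M (X k)"
    and lin_indep: "poly_lin_indep p"
    and deg: "\<And>k. degree (p k) \<le> CARD('n) - 1"
  defines "A \<equiv> (\<lambda>\<omega>. (\<chi> i j. X (Inl (i, j)) \<omega>) :: real^'n^'n)"
    and "C \<equiv> (\<lambda>\<omega>. (\<chi> i. X (Inr i) \<omega>) :: real^'n)"
  shows "{\<omega> \<in> space M.
            det (\<chi> i k. (poly_mat (p k) (map_matrix complex_of_real (A \<omega>))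
                          *v (\<chi> j. complex_of_real (C \<omega> $ j))) $ i) = 0} \<in> sets M
       \<and> measure M {\<omega> \<in> space M.
            det (\<chi> i k. (poly_mat (p k) (map_matrix complex_of_real (A \<omega>))
                          *v (\<chi> j. complex_of_real (C \<omega> $ j))) $ i) = 0} = 0"
proof -
  interpret P: prob_space M by fact
  have rv[measurable]: "X k \<in> borel_measurable M" for k
    using indep unfolding P.indep_vars_def by auto
  define Y where "Y \<omega> = (\<lambda>k. X k \<omega>)" for \<omega>
  define D where "D k = distr M borel (X k)" for k
  let ?P = "PiM (UNIV :: (('n \<times> 'n) + 'n) set) (\<lambda>_. borel :: real measure)"
  have distr: "distr M ?P Y = PiM UNIV D"
  proof -
    have "Y = (\<lambda>x i. X i x)" "D = (\<lambda>i. distr M borel (X i))" by (simp_all add: Y_def D_def fun_eq_iff)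
    then show ?thesis using P.indep_vars_iff_distr_eq_PiM[where I=UNIV and M'="\<lambda>_. borel" and X=X] indep
      by (simp add: restrict_UNIV)
  qed
  have Ym: "Y \<in> measurable M ?P"
    unfolding Y_def by (intro measurable_PiM_single') (auto simp: space_PiM)
  define G :: "((('n \<times> 'n) + 'n) \<Rightarrow> real) \<Rightarrow> complex" where
    "G y = det (\<chi> i k. (poly_mat (p k) (map_matrix complex_of_real (\<chi> i j. y (Inl (i, j))))
               *v (\<chi> j. complex_of_real (y (Inr j)))) $ i)" for y
  have Geq: "det (\<chi> i k. (poly_mat (p k) (map_matrix complex_of_real (A \<omega>))
                          *v (\<chi> j. complex_of_real (C \<omega> $ j))) $ i) = G (Y \<omega>)" for \<omega>
    by (simp add: G_def Y_def A_def C_def)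
  interpret Mc: clos "\<lambda>f::(('n \<times> 'n) + 'n \<Rightarrow> real) \<Rightarrow> complex. f \<in> borel_measurable ?P"
    by (rule meas_clos)
  interpret Cc: clos "CSP :: ((('n \<times> 'n) + 'n \<Rightarrow> real) \<Rightarrow> complex) \<Rightarrow> bool"
    by (rule CSP_clos)
  have Gm[measurable]: "G \<in> borel_measurable ?P"
    unfolding G_def
    by (rule Mc.det, simp, rule Mc.mulvec, rule Mc.polymat) (simp_all add: measurable_component_singleton)
  have GC: "CSP G"
    unfolding G_def
    by (rule Cc.det, simp, rule Cc.mulvec, rule Cc.polymat) (simp_all add: CSP_coord)
  have Zs: "{y \<in> space ?P. G y = 0} \<in> sets ?P" by measurable
  have sets1: "{\<omega> \<in> space M. G (Y \<omega>) = 0} \<in> sets M"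
    using measurable_sets[OF Ym Zs] by (simp add: vimage_def Int_def conj_commute space_PiM)
  obtain Ar :: "real^'n^'n" and Cr :: "real^'n" where nz:
     "det (\<chi> i k. (poly_mat (p k) (map_matrix complex_of_real Ar) *v (\<chi> j. complex_of_real (Cr $ j))) $ i) \<noteq> 0"
    using nonzero[OF lin_indep deg] by blast
  define x0 where "x0 z = (case z of Inl (i, j) \<Rightarrow> Ar $ i $ j | Inr j \<Rightarrow> Cr $ j)" for z
  have Gx0: "G x0 \<noteq> 0" using nz by (simp add: G_def x0_def)
  define f where "f y = Re (cnj (G x0) * G y)" for y
  have psp: "prob_space (D k)" for k unfolding D_def by (rule P.prob_space_distr) simp
  have setsD: "sets (D k) = sets borel" for k by (simp add: D_def)
  have spaceD: "space (D k) = UNIV" for k by (simp add: D_def)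
  have atom: "emeasure (D k) {a} = 0" for k a
  proof -
    have "emeasure (D k) {a} = emeasure M (X k -` {a} \<inter> space M)"
      unfolding D_def by (rule emeasure_distr) auto
    also have "X k -` {a} \<inter> space M = {\<omega> \<in> space M. X k \<omega> = a}" by auto
    also have "emeasure M \<dots> = P.prob {\<omega> \<in> space M. X k \<omega> = a}"
      by (simp add: P.emeasure_eq_measure)
    also have "\<dots> = 0" using nonsing[of k] by (simp add: P.non_singular_def)
    finally show ?thesis .
  qed
  have fSP: "\<exists>q. \<forall>t. f (x(v:=t)) = poly q t" for x v
  proof -
    obtain q where q: "\<forall>t. G (x(v:=t)) = poly q (complex_of_real t)" using GC unfolding CSP_def by blast
    show ?thesis
      by (intro exI[of _ "map_poly Re (smult (cnj (G x0)) q)"]) (simp add: f_def q Re_poly[symmetric])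
  qed
  have setsPD: "sets (PiM UNIV D) = sets ?P" by (intro sets_PiM_cong) (simp_all add: setsD)
  have fm: "f \<in> borel_measurable (PiM UNIV D)"
  proof -
    have "f \<in> borel_measurable ?P" unfolding f_def by measurable
    then show ?thesis using measurable_cong_sets[OF setsPD refl, of borel] by blast
  qed
  have spPD: "space (PiM UNIV D) = UNIV" by (simp add: space_PiM spaceD)
  have fx0: "f x0 \<noteq> 0"
    using Gx0 by (simp add: f_def complex_eq_iff)
  have null: "emeasure (PiM UNIV D) {y \<in> space (PiM UNIV D). f y = 0} = 0"
  proof -
    have "x0 \<in> space (PiM UNIV D)" using spPD by simp
    from core[OF psp setsD atom _ fSP fm this fx0] show ?thesis by simp
  qed
  have sub: "{y \<in> space ?P. G y = 0} \<subseteq> {y \<in> space (PiM UNIV D). f y = 0}"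
    by (auto simp: spPD f_def)
  have "emeasure (PiM UNIV D) {y \<in> space ?P. G y = 0} = 0"
  proof -
    have fs: "{y \<in> space (PiM UNIV D). f y = 0} \<in> sets (PiM UNIV D)" using fm by measurable
    show ?thesis using emeasure_mono[OF sub fs] null by (simp add: le_zero_eq)
  qed
  then have "measure (PiM UNIV D) {y \<in> space ?P. G y = 0} = 0" by (simp add: measure_def)
  then have "measure M (Y -` {y \<in> space ?P. G y = 0} \<inter> space M) = 0"
    using measure_distr[OF Ym Zs] distr by simp
  moreover have "Y -` {y \<in> space ?P. G y = 0} \<inter> space M = {\<omega> \<in> space M. G (Y \<omega>) = 0}"
    using measurable_space[OF Ym] by auto
  ultimately show ?thesis using sets1 by (simp add: Geq)
qed

end
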